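(* Let $\mathrm b_1,\mathrm b_2$ be two profiles, and let $L^{\mathrm b_1},L^{\mathrm b_2}$ be constructed from the same environment $\omega$. Let $k\le l$ be integers and $n\ge 1$. If $Z^{\mathrm b_1}[l]_n\le Z^{\mathrm b_2}[k]_n$, then $$L^{\mathrm b_1}[l]_n-L^{\mathrm b_1}[k]_n\le L^{\mathrm b_2}[l]_n-L^{\mathrm b_2}[k]_n .$$
   Context: Let $\omega=\{\omega_{i,j}:(i,j)\in\mathbb Z^2,\ i+j>0\}$ be i.i.d. exponential random variables with parameter $1$. Write $(i,j)\le(k,l)$ if $i\le k$ and $j\le l$. An up-right path from $\mathbf x$ to $\mathbf y$ is a sequence $\mathbf x=\mathbf x_0,\dots,\mathbf x_m=\mathbf y$ with increments in $\{(1,0),(0,1)\}$; its passage time is $\sum_{i=1}^m\omega_{\mathbf x_i}$ (starting point excluded). For $\mathbf x=(i,j)\le\mathbf y$ with $i+j\ge0$, $L(\mathbf x,\mathbf y)$ is the maximal passage time over up-right paths from $\mathbf x$ to $\mathbf y$. Set $L_k(\mathbf x)=L((k,-k),\mathbf x)$, $C^{\mathbf x}=\{k\in\mathbb Z:(k,-k)\le\mathbf x\}$ and $[k]_n:=(n+k,n-k)$. A profile is a function $\mathrm b:\mathbb Z\to\mathbb R\cup\{-\infty\}$ with $\mathrm b(0)=0$. Define $L^{\mathrm b}(\mathbf x):=\max_{k\in C^{\mathbf x}}\{\mathrm b(k)+L_k(\mathbf x)\}$ and the exit point $Z^{\mathrm b}(\mathbf x)$ as the largest $k\in C^{\mathbf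 x}$ attaining this maximum. *)

theory Defs
  imports "HOL-Analysis.Analysis"
begin

type_synonym point = "int \<times> int"

definition pt_le :: "point \<Rightarrow> point \<Rightarrow> bool" where
  "pt_le x y \<longleftrightarrow> fst x \<le> fst y \<and> snd x \<le> snd y"

definition up_right_path :: "point \<Rightarrow> point \<Rightarrow> point list \<Rightarrow> bool" where
  "up_right_path x y p \<longleftrightarrow> p \<noteq> [] \<and> hd p = x \<and> last p = y \<and>
     (\<forall>i. Suc i < length p \<longrightarrow>
        p ! Suc i = (fst (p ! i) + 1, snd (p ! i)) \<or> p ! Suc i = (fst (p ! i), snd (p ! i) + 1))"

text \<open>Passage time: sum of weights, starting point excluded.\<close>
definition passage_time :: "(point \<Rightarrow> real) \<Rightarrow> point list \<Rightarrow> real" where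
  "passage_time \<omega> p = sum_list (map \<omega> (tl p))"

definition LPP :: "(point \<Rightarrow> real) \<Rightarrow> point \<Rightarrow> point \<Rightarrow> real" where
  "LPP \<omega> x y = Max (passage_time \<omega> ` {p. up_right_path x y p})"

definition Lk :: "(point \<Rightarrow> real) \<Rightarrow> int \<Rightarrow> point \<Rightarrow> real" where
  "Lk \<omega> k x = LPP \<omega> (k, -k) x"

definition Cset :: "point \<Rightarrow> int set" where
  "Cset x = {k. pt_le (k, -k) x}"

definition diag_pt :: "int \<Rightarrow> nat \<Rightarrow> point" where
  "diag_pt k n = (int n + k, int n - k)"

text \<open>Profiles: functions Z \<rightarrow> R \<union> {-\<infinity>} with b(0) = 0, modelled in ereal.\<close>
definition profile :: "(int \<Rightarrow> ereal) \<Rightarrow> bool" where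
  "profile b \<longleftrightarrow> b 0 = 0 \<and> (\<forall>k. b k \<noteq> \<infinity>)"

definition Lb :: "(point \<Rightarrow> real) \<Rightarrow> (int \<Rightarrow> ereal) \<Rightarrow> point \<Rightarrow> ereal" where
  "Lb \<omega> b x = Max ((\<lambda>k. b k + ereal (Lk \<omega> k x)) ` Cset x)"

definition Zb :: "(point \<Rightarrow> real) \<Rightarrow> (int \<Rightarrow> ereal) \<Rightarrow> point \<Rightarrow> int" where
  "Zb \<omega> b x = Max {k \<in> Cset x. b k + ereal (Lk \<omega> k x) = Lb \<omega> b x}"

end

theory Submission
  imports Defs
begin


lemma urp_level:
  assumes "up_right_path x y p" "j < length p"
  shows "fst (p!j) + snd (p!j) = fst x + snd x + int j"
  using assms(2)
proof (induction j)
  case 0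
  then show ?case using assms(1) by (simp add: up_right_path_def hd_conv_nth[symmetric])
next
  case (Suc j)
  then have "fst (p!j) + snd (p!j) = fst x + snd x + int j" by simp
  moreover have "p ! Suc j = (fst (p ! j) + 1, snd (p ! j)) \<or> p ! Suc j = (fst (p ! j), snd (p ! j) + 1)"
    using assms(1) Suc.prems by (simp add: up_right_path_def)
  ultimately show ?case by auto
qed

lemma urp_length:
  assumes "up_right_path x y p"
  shows "int (length p) = fst y + snd y - fst x - snd x + 1"
proof -
  have ne: "p \<noteq> []" and l: "last p = y" using assms by (auto simp: up_right_path_def)
  have "y = p ! (length p - 1)" using ne l by (simp add: last_conv_nth)
  moreover have "fst (p!(length p - 1)) + snd (p!(length p - 1)) = fst x + snd x + int (length p - 1)"
    using urp_level[OF assms] ne by simp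
  ultimately show ?thesis using ne by (cases "length p") auto
qed

lemma urp_mono:
  assumes "up_right_path x y p" "i \<le> j" "j < length p"
  shows "pt_le (p!i) (p!j)"
  using assms(2,3)
proof (induction j rule: dec_induct)
  case base
  then show ?case by (simp add: pt_le_def)
next
  case (step j)
  have "p ! Suc j = (fst (p ! j) + 1, snd (p ! j)) \<or> p ! Suc j = (fst (p ! j), snd (p ! j) + 1)"
    using assms(1) step.prems by (simp add: up_right_path_def)
  then show ?case using step by (auto simp: pt_le_def)
qed

lemma urp_finite: "finite {p. up_right_path x y p}"
proof -
  let ?B = "{fst x..fst y} \<times> {snd x..snd y}"
  let ?N = "nat (fst y + snd y - fst x - snd x + 1)"
  have "{p. up_right_path x y p} \<subseteq> {p. set p \<subseteq> ?B \<and> length p = ?N}"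
  proof clarify
    fix p assume p: "up_right_path x y p"
    have ne: "p \<noteq> []" and h: "hd p = x" and l: "last p = y" using p by (auto simp: up_right_path_def)
    have "set p \<subseteq> ?B"
    proof
      fix v assume "v \<in> set p"
      then obtain i where i: "i < length p" "v = p!i" by (auto simp: in_set_conv_nth)
      have "pt_le (p!0) (p!i)" using urp_mono[OF p, of 0 i] i by simp
      moreover have "pt_le (p!i) (p!(length p - 1))" using urp_mono[OF p, of i "length p - 1"] i by simp
      moreover have "p!0 = x" using ne h by (simp add: hd_conv_nth)
      moreover have "p!(length p - 1) = y" using ne l by (simp add: last_conv_nth)
      ultimately show "v \<in> ?B" using i by (auto simp: pt_le_def mem_Times_iff)
    qed
    moreover have "length p = ?N" using urp_length[OF p] by simp
    ultimately show "set p \<subseteq> ?B \<and> length p = ?N" by simp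
  qed
  moreover have "finite {p. set p \<subseteq> ?B \<and> length p = ?N}"
    by (rule finite_lists_length_eq) simp
  ultimately show ?thesis by (rule finite_subset)
qed

lemma urp_cons:
  assumes "up_right_path x' y p" "x' = (fst x + 1, snd x) \<or> x' = (fst x, snd x + 1)"
  shows "up_right_path x y (x # p)"
proof -
  have ne: "p \<noteq> []" and h: "hd p = x'" using assms by (auto simp: up_right_path_def)
  show ?thesis unfolding up_right_path_def
  proof (intro conjI allI impI)
    show "last (x # p) = y" using ne assms(1) by (simp add: up_right_path_def)
  next
    fix i assume i: "Suc i < length (x # p)"
    show "(x # p) ! Suc i = (fst ((x # p) ! i) + 1, snd ((x # p) ! i)) \<or>
          (x # p) ! Suc i = (fst ((x # p) ! i), snd ((x # p) ! i) + 1)"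
    proof (cases i)
      case 0
      then show ?thesis using ne h assms(2) by (simp add: hd_conv_nth)
    next
      case (Suc i')
      then show ?thesis using assms(1) i by (simp add: up_right_path_def)
    qed
  qed simp_all
qed

lemma urp_exists_aux:
  "\<forall>x. d = nat (fst y + snd y - fst x - snd x) \<longrightarrow> pt_le x y \<longrightarrow> (\<exists>p. up_right_path x y p)"
proof (induction d)
  case 0
  show ?case
  proof clarify
    fix a b assume "0 = nat (fst y + snd y - fst (a,b) - snd (a,b))" "pt_le (a,b) y"
    then have "(a,b) = y" by (cases y) (auto simp: pt_le_def)
    then show "\<exists>p. up_right_path (a,b) y p"
      by (intro exI[of _ "[y]"]) (simp add: up_right_path_def)
  qed
next
  case (Suc d)
  show ?case
  proof clarify
    fix a b assume d: "Suc d = nat (fst y + snd y - fst (a,b) - snd (a,b))" and le: "pt_le (a,b) y"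
    show "\<exists>p. up_right_path (a,b) y p"
    proof (cases "a < fst y")
      case True
      then have "pt_le (a+1,b) y" "d = nat (fst y + snd y - fst (a+1,b) - snd (a+1,b))"
        using le d by (auto simp: pt_le_def)
      then obtain p where "up_right_path (a+1,b) y p" using Suc.IH by blast
      then show ?thesis by (intro exI, rule urp_cons) auto
    next
      case False
      then have "pt_le (a,b+1) y" "d = nat (fst y + snd y - fst (a,b+1) - snd (a,b+1))"
        using le d by (auto simp: pt_le_def)
      then obtain p where "up_right_path (a,b+1) y p" using Suc.IH by blast
      then show ?thesis by (intro exI, rule urp_cons) auto
    qed
  qed
qed

lemma urp_exists: "pt_le x y \<Longrightarrow> \<exists>p. up_right_path x y p"
  using urp_exists_aux by blast

lemma LPP_ge: "up_right_path x y p \<Longrightarrow> passage_time \<omega> p \<le> LPP \<omega> x y"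
  unfolding LPP_def by (rule Max_ge) (use urp_finite in auto)

lemma LPP_geo: "pt_le x y \<Longrightarrow> \<exists>p. up_right_path x y p \<and> LPP \<omega> x y = passage_time \<omega> p"
proof -
  assume "pt_le x y"
  then have "{p. up_right_path x y p} \<noteq> {}" using urp_exists by blast
  then have "LPP \<omega> x y \<in> passage_time \<omega> ` {p. up_right_path x y p}"
    unfolding LPP_def by (intro Max_in) (use urp_finite in auto)
  then show ?thesis by auto
qed

lemma pt_sum: "passage_time \<omega> r = (\<Sum>t=1..<length r. \<omega> (r!t))"
proof -
  have "passage_time \<omega> r = (\<Sum>i<length r - 1. \<omega> (r ! Suc i))"
    unfolding passage_time_def by (simp add: sum_list_sum_nth nth_tl atLeast0LessThan)
  also have "\<dots> = (\<Sum>i=0..<length r - 1. \<omega> (r ! Suc i))"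
    by (simp only: atLeast0LessThan)
  also have "\<dots> = (\<Sum>t=1..<length r. \<omega> (r!t))"
    using sum.shift_bounds_Suc_ivl[of "\<lambda>t. \<omega> (r!t)" 0 "length r - 1"]
    by (cases "length r") simp_all
  finally show ?thesis .
qed

lemma discrete_ivt:
  fixes h :: "nat \<Rightarrow> int"
  shows "h 0 \<le> 0 \<Longrightarrow> h N \<ge> 0 \<Longrightarrow> \<forall>j<N. \<bar>h (Suc j) - h j\<bar> \<le> 1 \<Longrightarrow> \<exists>j\<le>N. h j = 0"
proof (induction N)
  case 0 then show ?case by auto
next
  case (Suc N)
  show ?case
  proof (cases "h N \<ge> 0")
    case True then show ?thesis using Suc by (metis le_Suc_eq less_SucI)
  next
    case False then have "h (Suc N) = 0" using Suc.prems by force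
    then show ?thesis by blast
  qed
qed


lemma crossing:
  assumes p: "up_right_path a y p" and q: "up_right_path c x q"
    and lev0: "fst a + snd a = fst c + snd c" and lev1: "fst x + snd x = fst y + snd y"
    and ac: "fst a \<le> fst c" and xy: "fst x \<le> fst y"
  shows "passage_time \<omega> p + passage_time \<omega> q \<le> LPP \<omega> a x + LPP \<omega> c y"
proof -
  have pne: "p \<noteq> []" and ph: "hd p = a" and pl: "last p = y" using p by (auto simp: up_right_path_def)
  have qne: "q \<noteq> []" and qh: "hd q = c" and ql: "last q = x" using q by (auto simp: up_right_path_def)
  define m where "m = length p"
  have lq: "length q = m" using urp_length[OF p] urp_length[OF q] lev0 lev1 unfolding m_def by linarith
  have m1: "m \<ge> 1" using pne m_def by (cases p) auto
  have p0: "p!0 = a" using pne ph by (simp add: hd_conv_nth)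
  have q0: "q!0 = c" using qne qh by (simp add: hd_conv_nth)
  have pm: "p!(m-1) = y" using pne pl m_def by (simp add: last_conv_nth)
  have qm: "q!(m-1) = x" using qne ql lq by (simp add: last_conv_nth)
  define h where "h j = fst (p!j) - fst (q!j)" for j
  have "\<exists>j\<le>m-1. h j = 0"
  proof (rule discrete_ivt)
    show "h 0 \<le> 0" using p0 q0 ac by (simp add: h_def)
    show "h (m-1) \<ge> 0" using pm qm xy by (simp add: h_def)
    show "\<forall>j<m-1. \<bar>h (Suc j) - h j\<bar> \<le> 1"
    proof (intro allI impI)
      fix j assume j: "j < m - 1"
      have "p ! Suc j = (fst (p ! j) + 1, snd (p ! j)) \<or> p ! Suc j = (fst (p ! j), snd (p ! j) + 1)"
        using p j m_def by (simp add: up_right_path_def)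
      moreover have "q ! Suc j = (fst (q ! j) + 1, snd (q ! j)) \<or> q ! Suc j = (fst (q ! j), snd (q ! j) + 1)"
        using q j lq by (simp add: up_right_path_def)
      ultimately show "\<bar>h (Suc j) - h j\<bar> \<le> 1" unfolding h_def by auto
    qed
  qed
  then obtain j where j: "j \<le> m - 1" "h j = 0" by blast
  have jm: "j < m" using j m1 by simp
  have pq: "p!j = q!j"
  proof -
    have "fst (p!j) + snd (p!j) = fst a + snd a + int j" using urp_level[OF p] jm m_def by simp
    moreover have "fst (q!j) + snd (q!j) = fst c + snd c + int j" using urp_level[OF q] jm lq by simp
    ultimately show ?thesis using j(2) lev0 unfolding h_def by (simp add: prod_eq_iff)
  qed
  define r1 where "r1 = map (\<lambda>t. if t \<le> j then p!t else q!t) [0..<m]"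
  define r2 where "r2 = map (\<lambda>t. if t \<le> j then q!t else p!t) [0..<m]"
  have r1n: "t < m \<Longrightarrow> r1!t = (if t \<le> j then p!t else q!t)" for t by (simp add: r1_def)
  have r2n: "t < m \<Longrightarrow> r2!t = (if t \<le> j then q!t else p!t)" for t by (simp add: r2_def)
  have r1n': "t < m \<Longrightarrow> r1!t = (if t < j then p!t else q!t)" for t using r1n pq by auto
  have r2n': "t < m \<Longrightarrow> r2!t = (if t < j then q!t else p!t)" for t using r2n pq by auto
  have lr1: "length r1 = m" and lr2: "length r2 = m" by (simp_all add: r1_def r2_def)
  have ur1: "up_right_path a x r1" unfolding up_right_path_def
  proof (intro conjI allI impI)
    show "r1 \<noteq> []" using lr1 m1 by auto
    show "hd r1 = a" using r1n[of 0] m1 p0 lr1 \<open>r1 \<noteq> []\<close> by (simp add: hd_conv_nth)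
    show "last r1 = x" using r1n'[of "m-1"] m1 qm lr1 \<open>r1 \<noteq> []\<close> j by (simp add: last_conv_nth)
    fix i assume i: "Suc i < length r1"
    show "r1 ! Suc i = (fst (r1 ! i) + 1, snd (r1 ! i)) \<or> r1 ! Suc i = (fst (r1 ! i), snd (r1 ! i) + 1)"
    proof (cases "Suc i \<le> j")
      case True
      then show ?thesis using r1n[of i] r1n[of "Suc i"] i lr1 p m_def by (simp add: up_right_path_def)
    next
      case False
      then show ?thesis using r1n'[of i] r1n'[of "Suc i"] i lr1 q lq by (simp add: up_right_path_def)
    qed
  qed
  have ur2: "up_right_path c y r2" unfolding up_right_path_def
  proof (intro conjI allI impI)
    show "r2 \<noteq> []" using lr2 m1 by auto
    show "hd r2 = c" using r2n[of 0] m1 q0 lr2 \<open>r2 \<noteq> []\<close> by (simp add: hd_conv_nth)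
    show "last r2 = y" using r2n'[of "m-1"] m1 pm lr2 \<open>r2 \<noteq> []\<close> j by (simp add: last_conv_nth)
    fix i assume i: "Suc i < length r2"
    show "r2 ! Suc i = (fst (r2 ! i) + 1, snd (r2 ! i)) \<or> r2 ! Suc i = (fst (r2 ! i), snd (r2 ! i) + 1)"
    proof (cases "Suc i \<le> j")
      case True
      then show ?thesis using r2n[of i] r2n[of "Suc i"] i lr2 q lq by (simp add: up_right_path_def)
    next
      case False
      then show ?thesis using r2n'[of i] r2n'[of "Suc i"] i lr2 p m_def by (simp add: up_right_path_def)
    qed
  qed
  have "passage_time \<omega> p + passage_time \<omega> q = (\<Sum>t=1..<m. \<omega> (p!t) + \<omega> (q!t))"
    by (simp add: pt_sum sum.distrib m_def[symmetric] lq)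
  also have "\<dots> = (\<Sum>t=1..<m. \<omega> (r1!t) + \<omega> (r2!t))"
    by (rule sum.cong) (auto simp: r1n r2n)
  also have "\<dots> = passage_time \<omega> r1 + passage_time \<omega> r2"
    by (simp add: pt_sum sum.distrib lr1 lr2)
  also have "\<dots> \<le> LPP \<omega> a x + LPP \<omega> c y"
    using LPP_ge[OF ur1, of \<omega>] LPP_ge[OF ur2, of \<omega>] by simp
  finally show ?thesis .
qed

lemma Cset_eq: "Cset x = {-snd x..fst x}"
  by (auto simp: Cset_def pt_le_def)

lemma Lb_ge: "j \<in> Cset x \<Longrightarrow> b j + ereal (Lk \<omega> j x) \<le> Lb \<omega> b x"
  unfolding Lb_def by (rule Max_ge) (auto simp: Cset_eq)

lemma Zb_prop:
  assumes "Cset x \<noteq> {}"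
  shows "Zb \<omega> b x \<in> Cset x \<and> b (Zb \<omega> b x) + ereal (Lk \<omega> (Zb \<omega> b x) x) = Lb \<omega> b x"
proof -
  have "Lb \<omega> b x \<in> (\<lambda>k. b k + ereal (Lk \<omega> k x)) ` Cset x"
    unfolding Lb_def by (rule Max_in) (use assms in \<open>auto simp: Cset_eq\<close>)
  then have ne: "{k \<in> Cset x. b k + ereal (Lk \<omega> k x) = Lb \<omega> b x} \<noteq> {}" by auto
  have "Zb \<omega> b x \<in> {k \<in> Cset x. b k + ereal (Lk \<omega> k x) = Lb \<omega> b x}"
    unfolding Zb_def by (rule Max_in) (use ne in \<open>auto simp: Cset_eq intro: finite_subset[of _ "{-snd x..fst x}"]\<close>)
  then show ?thesis by simp
qed

theorem lemma1:
  fixes \<omega> :: "point \<Rightarrow> real" and b1 b2 :: "int \<Rightarrow> ereal" and k l :: int and n :: nat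
  assumes "\<forall>x. 0 < \<omega> x"
    and "profile b1" and "profile b2"
    and "k \<le> l" and "n \<ge> 1"
    and "Lb \<omega> b1 (diag_pt l n) \<noteq> -\<infinity>" and "Lb \<omega> b1 (diag_pt k n) \<noteq> -\<infinity>"
    and "Lb \<omega> b2 (diag_pt l n) \<noteq> -\<infinity>" and "Lb \<omega> b2 (diag_pt k n) \<noteq> -\<infinity>"
    and "Zb \<omega> b1 (diag_pt l n) \<le> Zb \<omega> b2 (diag_pt k n)"
  shows "Lb \<omega> b1 (diag_pt l n) - Lb \<omega> b1 (diag_pt k n)
         \<le> Lb \<omega> b2 (diag_pt l n) - Lb \<omega> b2 (diag_pt k n)"
proof -
  define y where "y = diag_pt l n"
  define x where "x = diag_pt k n"
  define Z1 where "Z1 = Zb \<omega> b1 y"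
  define Z2 where "Z2 = Zb \<omega> b2 x"
  have Cy: "Cset y = {l - int n..l + int n}" by (auto simp: y_def diag_pt_def Cset_eq)
  have Cx: "Cset x = {k - int n..k + int n}" by (auto simp: x_def diag_pt_def Cset_eq)
  have Z1p: "Z1 \<in> Cset y" "b1 Z1 + ereal (Lk \<omega> Z1 y) = Lb \<omega> b1 y"
    using Zb_prop[of y \<omega> b1] Cy by (auto simp: Z1_def)
  have Z2p: "Z2 \<in> Cset x" "b2 Z2 + ereal (Lk \<omega> Z2 x) = Lb \<omega> b2 x"
    using Zb_prop[of x \<omega> b2] Cx by (auto simp: Z2_def)
  have Z12: "Z1 \<le> Z2" using assms(10) by (simp add: Z1_def Z2_def x_def y_def)
  have Z1x: "Z1 \<in> Cset x" using Z1p(1) Z2p(1) Z12 Cx Cy assms(4) by auto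
  have Z2y: "Z2 \<in> Cset y" using Z1p(1) Z2p(1) Z12 Cx Cy assms(4) by auto
  have g1: "b1 Z1 + ereal (Lk \<omega> Z1 x) \<le> Lb \<omega> b1 x" by (rule Lb_ge[OF Z1x])
  have g2: "b2 Z2 + ereal (Lk \<omega> Z2 y) \<le> Lb \<omega> b2 y" by (rule Lb_ge[OF Z2y])
  have cr: "Lk \<omega> Z1 y + Lk \<omega> Z2 x \<le> Lk \<omega> Z1 x + Lk \<omega> Z2 y"
  proof -
    obtain p where p: "up_right_path (Z1,-Z1) y p" "LPP \<omega> (Z1,-Z1) y = passage_time \<omega> p"
      using LPP_geo[of "(Z1,-Z1)" y \<omega>] Z1p(1) by (auto simp: Cset_def)
    obtain q where q: "up_right_path (Z2,-Z2) x q" "LPP \<omega> (Z2,-Z2) x = passage_time \<omega> q"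
      using LPP_geo[of "(Z2,-Z2)" x \<omega>] Z2p(1) by (auto simp: Cset_def)
    have "passage_time \<omega> p + passage_time \<omega> q \<le> LPP \<omega> (Z1,-Z1) x + LPP \<omega> (Z2,-Z2) y"
      by (rule crossing[OF p(1) q(1)]) (use Z12 assms(4) in \<open>auto simp: x_def y_def diag_pt_def\<close>)
    then show ?thesis using p(2) q(2) by (simp add: Lk_def)
  qed
  have f1: "b1 Z1 \<noteq> \<infinity>" "b2 Z2 \<noteq> \<infinity>" using assms(2,3) by (auto simp: profile_def)
  have f2: "b1 Z1 \<noteq> -\<infinity>" using Z1p(2) assms(6) y_def by auto
  have f3: "b2 Z2 \<noteq> -\<infinity>" using Z2p(2) assms(9) x_def by auto
  obtain \<beta>1 where B1: "b1 Z1 = ereal \<beta>1" using f1 f2 by (cases "b1 Z1") auto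
  obtain \<beta>2 where B2: "b2 Z2 = ereal \<beta>2" using f1 f3 by (cases "b2 Z2") auto
  have A1: "Lb \<omega> b1 y = ereal (\<beta>1 + Lk \<omega> Z1 y)" using Z1p(2) B1 by simp
  have A2: "Lb \<omega> b2 x = ereal (\<beta>2 + Lk \<omega> Z2 x)" using Z2p(2) B2 by simp
  have "Lb \<omega> b1 x \<noteq> \<infinity>"
  proof -
    have "Lb \<omega> b1 x \<in> (\<lambda>k. b1 k + ereal (Lk \<omega> k x)) ` Cset x"
      unfolding Lb_def by (rule Max_in) (use Cx in \<open>auto simp: Cset_eq\<close>)
    then show ?thesis using assms(2) by (auto simp: profile_def)
  qed
  then obtain c1 where C1: "Lb \<omega> b1 x = ereal c1" using assms(7) x_def by (cases "Lb \<omega> b1 x") auto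
  have "Lb \<omega> b2 y \<noteq> \<infinity>"
  proof -
    have "Lb \<omega> b2 y \<in> (\<lambda>k. b2 k + ereal (Lk \<omega> k y)) ` Cset y"
      unfolding Lb_def by (rule Max_in) (use Cy in \<open>auto simp: Cset_eq\<close>)
    then show ?thesis using assms(3) by (auto simp: profile_def)
  qed
  then obtain c2 where C2: "Lb \<omega> b2 y = ereal c2" using assms(8) y_def by (cases "Lb \<omega> b2 y") auto
  have i1: "\<beta>1 + Lk \<omega> Z1 x \<le> c1" using g1 B1 C1 by simp
  have i2: "\<beta>2 + Lk \<omega> Z2 y \<le> c2" using g2 B2 C2 by simp
  have "(\<beta>1 + Lk \<omega> Z1 y) - c1 \<le> c2 - (\<beta>2 + Lk \<omega> Z2 x)" using i1 i2 cr by linarith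
  then show ?thesis using A1 A2 C1 C2 by (simp add: x_def y_def)
qed

end
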